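(* Let $G$ be a finite graph with no isolated vertices such that there is no nontrivial circuit injection $f:G_M\rightarrow B$ with $B$ a binary matroid. If $G$ has $2N$ vertices, then $G$ is Hamiltonian; if $G$ has $2N+1$ vertices, then $G$ is almost Hamiltonian.
   Context: Graphs are undirected without loops or multiple edges. $G_M$ is the cycle matroid of $G$ (cells: edges; circuits: edge sets of cycles of $G$). A matroid is a pair $(S,\mathscr{C})$, $S\neq\emptyset$, $\mathscr{C}\subseteq 2^S$, satisfying: (I) $A,B\in\mathscr{C}$, $A\subseteq B$ implies $A=B$; (II) $A,B\in\mathscr{C}$, $a\in A\cap B$, $b\in (A\cup B)\setminus(A\cap B)$ implies there exists $D\in\mathscr{C}$ with $D\subseteq A\cup B$, $a\notin D$, $b\in D$. A matroid is binary if the symmetric difference of any two circuits is a union of pairwise disjoint circuits. A circuit injection $f:G_M\rightarrow B$ is a bijection from $E(G)$ onto the cells of $B$ sending each circuit of $G$ to a circuit of $B$; it is nontrivial if $B$ has a circuit not equal to the image of any circuit of $G$. $G$ is Hamiltonian if some circuit contains all its vertices. A graph with $n$ vertices is almost Hamiltonian if every set of $n-1$ of its vertices is contained in the vertex set of some circuit. *)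

theory Defs
  imports Main
begin

definition graph :: "'v set \<Rightarrow> 'v set set \<Rightarrow> bool" where
  "graph V E \<longleftrightarrow> finite V \<and> (\<forall>e\<in>E. \<exists>u v. e = {u, v} \<and> u \<in> V \<and> v \<in> V \<and> u \<noteq> v)"

definition no_isolated_vertices :: "'v set \<Rightarrow> 'v set set \<Rightarrow> bool" where
  "no_isolated_vertices V E \<longleftrightarrow> (\<forall>v\<in>V. \<exists>e\<in>E. v \<in> e)"

definition cycle_edges :: "'v list \<Rightarrow> 'v set set" where
  "cycle_edges vs = {{vs ! i, vs ! ((i + 1) mod length vs)} | i. i < length vs}"

definition is_cycle :: "'v set \<Rightarrow> 'v set set \<Rightarrow> 'v list \<Rightarrow> bool" where
  "is_cycle V E vs \<longleftrightarrow> length vs \<ge> 3 \<and> distinct vs \<and> set vs \<subseteq> V \<and> cycle_edges vs \<subseteq> E"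

definition graph_circuits :: "'v set \<Rightarrow> 'v set set \<Rightarrow> 'v set set set" where
  "graph_circuits V E = {cycle_edges vs | vs. is_cycle V E vs}"

definition cycle_matroid :: "'v set \<Rightarrow> 'v set set \<Rightarrow> 'v set set \<times> 'v set set set" where
  "cycle_matroid V E = (E, graph_circuits V E)"

definition circuit_vertices :: "'v set set \<Rightarrow> 'v set" where
  "circuit_vertices C = \<Union>C"

definition matroid :: "'b set \<Rightarrow> 'b set set \<Rightarrow> bool" where
  "matroid S \<C> \<longleftrightarrow> S \<noteq> {} \<and> \<C> \<subseteq> Pow S
     \<and> (\<forall>A\<in>\<C>. \<forall>B\<in>\<C>. A \<subseteq> B \<longrightarrow> A = B)
     \<and> (\<forall>A\<in>\<C>. \<forall>B\<in>\<C>. \<forall>a\<in>A \<inter> B. \<forall>b\<in>(A \<union> B) - (A \<inter> B).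
          \<exists>D\<in>\<C>. D \<subseteq> A \<union> B \<and> a \<notin> D \<and> b \<in> D)"

definition binary_matroid :: "'b set \<Rightarrow> 'b set set \<Rightarrow> bool" where
  "binary_matroid S \<C> \<longleftrightarrow> matroid S \<C> \<and>
     (\<forall>A\<in>\<C>. \<forall>B\<in>\<C>. \<exists>F. F \<subseteq> \<C> \<and> pairwise disjnt F \<and> \<Union>F = (A - B) \<union> (B - A))"

definition circuit_injection ::
  "('a \<Rightarrow> 'b) \<Rightarrow> 'a set \<times> 'a set set \<Rightarrow> 'b set \<times> 'b set set \<Rightarrow> bool" where
  "circuit_injection f M B \<longleftrightarrow> bij_betw f (fst M) (fst B) \<and> (\<forall>C\<in>snd M. f ` C \<in> snd B)"

definition nontrivial_circuit_injection ::
  "('a \<Rightarrow> 'b) \<Rightarrow> 'a set \<times> 'a set set \<Rightarrow> 'b set \<times> 'b set set \<Rightarrow> bool" where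
  "nontrivial_circuit_injection f M B \<longleftrightarrow> circuit_injection f M B \<and>
     (\<exists>D\<in>snd B. D \<notin> (\<lambda>C. f ` C) ` snd M)"

definition hamiltonian :: "'v set \<Rightarrow> 'v set set \<Rightarrow> bool" where
  "hamiltonian V E \<longleftrightarrow> (\<exists>C\<in>graph_circuits V E. V \<subseteq> circuit_vertices C)"

definition almost_hamiltonian :: "'v set \<Rightarrow> 'v set set \<Rightarrow> bool" where
  "almost_hamiltonian V E \<longleftrightarrow>
     (\<forall>W. W \<subseteq> V \<and> card W = card V - 1 \<longrightarrow>
        (\<exists>C\<in>graph_circuits V E. W \<subseteq> circuit_vertices C))"

end

theory Submission imports Defs begin

definition edg :: "'v list \<Rightarrow> nat \<Rightarrow> 'v set" where
  "edg vs i = {vs ! i, vs ! ((i+1) mod length vs)}"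

lemma cycle_edges_edg: "cycle_edges vs = edg vs ` {..<length vs}"
  unfolding cycle_edges_def edg_def by auto

lemma suc_mod: "k < n \<Longrightarrow> Suc k mod (n::nat) = (if Suc k = n then 0 else Suc k)"
  by auto

lemma mod_lt[simp]: "k < (n::nat) \<Longrightarrow> Suc k mod n < n"
  by (metis mod_less_divisor gr_zeroI less_nat_zero_code)

lemma edg_mem:
  assumes "distinct vs" "j < length vs" "k < length vs"
  shows "vs ! j \<in> edg vs k \<longleftrightarrow> k = j \<or> (k+1) mod length vs = j"
proof -
  have "Suc k mod length vs < length vs" using assms by auto
  then show ?thesis using assms unfolding edg_def
    by (auto simp: nth_eq_iff_index_eq)
qed

lemma suc_mod_inj: "k < n \<Longrightarrow> p < n \<Longrightarrow> (k+1) mod (n::nat) = (p+1) mod n \<Longrightarrow> k = p"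
  using suc_mod[of k n] suc_mod[of p n] by (auto split: if_splits)

lemma edg_inj:
  assumes "distinct vs" "length vs \<ge> 3" "i < length vs" "k < length vs" "edg vs i = edg vs k"
  shows "i = k"
proof (rule ccontr)
  assume ne: "i \<noteq> k"
  let ?n = "length vs"
  have "vs ! i \<in> edg vs k" using assms(5) unfolding edg_def by auto
  with assms ne have 1: "(k+1) mod ?n = i" using edg_mem by metis
  have "vs ! k \<in> edg vs i" using assms(5) unfolding edg_def by auto
  with assms ne have 2: "(i+1) mod ?n = k" using edg_mem by metis
  have "Suc k mod ?n = (if Suc k = ?n then 0 else Suc k)" using assms(4) by (rule suc_mod)
  moreover have "Suc i mod ?n = (if Suc i = ?n then 0 else Suc i)" using assms(3) by (rule suc_mod)
  ultimately show False using 1 2 assms(2,3,4) ne by (auto split: if_splits)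
qed

lemma pred_idx:
  assumes "j < (n::nat)" "n \<ge> 3"
  shows "\<exists>p<n. (p+1) mod n = j \<and> p \<noteq> j"
proof (cases "j = 0")
  case True
  then show ?thesis using assms by (intro exI[of _ "n-1"]) auto
next
  case False
  then show ?thesis using assms by (intro exI[of _ "j-1"]) auto
qed

lemma edg_subset: "i < length vs \<Longrightarrow> edg vs i \<subseteq> set vs"
  unfolding edg_def by (auto intro!: nth_mem simp: mod_less_divisor)

lemma incident_cycle:
  assumes "distinct vs" "length vs \<ge> 3" "j < length vs" "p < length vs" "(p+1) mod length vs = j"
  shows "{e \<in> cycle_edges vs. vs ! j \<in> e} = {edg vs j, edg vs p}"
proof -
  have kp: "(k+1) mod length vs = j \<Longrightarrow> k < length vs \<Longrightarrow> k = p" for k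
    using suc_mod_inj[of k "length vs" p] assms(4,5) by simp
  show ?thesis
  proof (intro equalityI subsetI)
    fix e assume "e \<in> {e \<in> cycle_edges vs. vs ! j \<in> e}"
    then obtain k where k: "k < length vs" "e = edg vs k" "vs ! j \<in> edg vs k"
      unfolding cycle_edges_edg by auto
    then have "k = j \<or> (k+1) mod length vs = j" using edg_mem[OF assms(1,3) k(1)] by simp
    then show "e \<in> {edg vs j, edg vs p}" using kp k by auto
  next
    fix e assume "e \<in> {edg vs j, edg vs p}"
    moreover have "vs ! j \<in> edg vs j" "vs ! j \<in> edg vs p" using assms(5) unfolding edg_def by auto
    ultimately show "e \<in> {e \<in> cycle_edges vs. vs ! j \<in> e}"
      using assms(3,4) unfolding cycle_edges_edg by auto
  qed
qed


definition deg :: "'v set set \<Rightarrow> 'v \<Rightarrow> nat" where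
  "deg J v = card {e\<in>J. v\<in>e}"

definition oddset :: "'v set \<Rightarrow> 'v set set \<Rightarrow> 'v set" where
  "oddset V J = {v\<in>V. odd (deg J v)}"

abbreviation sdiff (infixl "\<triangle>" 65) where "A \<triangle> B \<equiv> (A - B) \<union> (B - A)"

lemma card_sdiff_eq:
  assumes "finite X" "finite Y"
  shows "card (X \<triangle> Y) + 2 * card (X \<inter> Y) = card X + card Y"
proof -
  have "card (X \<triangle> Y) = card (X - Y) + card (Y - X)"
    by (rule card_Un_disjoint) (use assms in auto)
  moreover have "card X = card (X - Y) + card (X \<inter> Y)"
    using assms by (metis Int_Diff_disjoint Int_commute Un_Diff_Int card_Un_disjoint finite_Diff finite_Int)
  moreover have "card Y = card (Y - X) + card (X \<inter> Y)"
    using assms by (metis Int_Diff_disjoint Int_commute Un_Diff_Int card_Un_disjoint finite_Diff finite_Int)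
  ultimately show ?thesis by simp
qed

lemma deg_sdiff:
  assumes "finite A" "finite B"
  shows "deg (A \<triangle> B) v + 2 * deg (A \<inter> B) v = deg A v + deg B v"
proof -
  have 1: "{e \<in> A \<triangle> B. v \<in> e} = {e\<in>A. v\<in>e} \<triangle> {e\<in>B. v\<in>e}" by auto
  have 2: "{e \<in> A \<inter> B. v \<in> e} = {e\<in>A. v\<in>e} \<inter> {e\<in>B. v\<in>e}" by auto
  show ?thesis unfolding deg_def 1 2 by (rule card_sdiff_eq) (use assms in auto)
qed

lemma oddset_sdiff:
  assumes "finite A" "finite B"
  shows "oddset V (A \<triangle> B) = oddset V A \<triangle> oddset V B"
proof -
  have "odd (deg (A \<triangle> B) v) \<longleftrightarrow> odd (deg A v) \<noteq> odd (deg B v)" for v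
    using deg_sdiff[OF assms, of v]
    by (metis even_add even_mult_iff even_numeral)
  then show ?thesis unfolding oddset_def by auto
qed

lemma deg_cycle_on:
  assumes "distinct vs" "length vs \<ge> 3" "j < length vs"
  shows "deg (cycle_edges vs) (vs ! j) = 2"
proof -
  obtain p where p: "p < length vs" "(p+1) mod length vs = j" "p \<noteq> j"
    using pred_idx assms by metis
  have "edg vs j \<noteq> edg vs p" using edg_inj assms p by metis
  then show ?thesis unfolding deg_def using incident_cycle[OF assms p(1,2)] by simp
qed

lemma deg_cycle_off:
  assumes "v \<notin> set vs" "D \<subseteq> cycle_edges vs"
  shows "deg D v = 0"
proof -
  have "{e\<in>D. v\<in>e} = {}" using assms edg_subset unfolding cycle_edges_edg by blast
  then show ?thesis unfolding deg_def by (simp only: card.empty)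
qed

lemma oddset_cycle:
  assumes "distinct vs" "length vs \<ge> 3"
  shows "oddset V (cycle_edges vs) = {}"
proof -
  have "even (deg (cycle_edges vs) v)" for v
  proof (cases "v \<in> set vs")
    case True
    then obtain j where "j < length vs" "v = vs ! j" by (metis in_set_conv_nth)
    then show ?thesis using deg_cycle_on[OF assms] by simp
  next
    case False
    then show ?thesis using deg_cycle_off[of v vs "cycle_edges vs"] by simp
  qed
  then show ?thesis unfolding oddset_def by auto
qed

lemma oddset_sub_cycle:
  assumes "D \<subseteq> cycle_edges vs"
  shows "oddset V D \<subseteq> set vs"
  using deg_cycle_off[OF _ assms] unfolding oddset_def by fastforce

lemma all_in_closed:
  assumes "\<forall>i<n. edg vs i \<in> D \<longrightarrow> edg vs ((i+1) mod n) \<in> D" "k < n" "edg vs k \<in> D"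
  shows "edg vs ((k+m) mod n) \<in> D"
proof (induction m)
  case 0
  then show ?case using assms by simp
next
  case (Suc m)
  have "(k + Suc m) mod n = ((k+m) mod n + 1) mod n" by (simp add: mod_Suc_eq)
  moreover have "(k+m) mod n < n" using assms(2) by simp
  ultimately show ?case using assms(1) Suc by simp
qed

lemma deg_one_sub_cycle:
  assumes "distinct vs" "length vs \<ge> 3" "set vs \<subseteq> V"
    and "D \<subseteq> cycle_edges vs" "D \<noteq> {}" "D \<noteq> cycle_edges vs"
  shows "oddset V D \<noteq> {}"
proof -
  let ?n = "length vs"
  have "\<exists>i<?n. edg vs i \<in> D \<and> edg vs ((i+1) mod ?n) \<notin> D"
  proof (rule ccontr)
    assume "\<not> ?thesis"
    then have cl: "\<forall>i<?n. edg vs i \<in> D \<longrightarrow> edg vs ((i+1) mod ?n) \<in> D" by blast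
    obtain k where k: "k < ?n" "edg vs k \<in> D" using assms(4,5) unfolding cycle_edges_edg by blast
    have "edg vs i \<in> D" if "i < ?n" for i
    proof -
      have "(k + (?n - k + i)) mod ?n = i" using k that by simp
      then show ?thesis using all_in_closed[OF cl k, of "?n - k + i"] by simp
    qed
    then have "cycle_edges vs \<subseteq> D" unfolding cycle_edges_edg by blast
    then show False using assms(4,6) by blast
  qed
  then obtain i where i: "i < ?n" "edg vs i \<in> D" "edg vs ((i+1) mod ?n) \<notin> D" by blast
  define j where "j = (i+1) mod ?n"
  have j: "j < ?n" using i unfolding j_def by simp
  have "{e \<in> D. vs ! j \<in> e} = {e \<in> cycle_edges vs. vs ! j \<in> e} \<inter> D" using assms(4) by auto
  also have "\<dots> = {edg vs j, edg vs i} \<inter> D"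
    using incident_cycle[OF assms(1,2) j i(1)] j_def by simp
  also have "\<dots> = {edg vs i}" using i j_def by auto
  finally have "deg D (vs ! j) = 1" unfolding deg_def by simp
  moreover have "vs ! j \<in> V" using j assms(3) by auto
  ultimately show ?thesis unfolding oddset_def by auto
qed


definition Zs :: "'v set \<Rightarrow> 'v set set \<Rightarrow> 'v set \<Rightarrow> 'v set set set" where
  "Zs V E T = {P. P \<subseteq> E \<and> (oddset V P = {} \<or> oddset V P = T)}"

definition circs :: "'v set \<Rightarrow> 'v set set \<Rightarrow> 'v set \<Rightarrow> 'v set set set" where
  "circs V E T = {D \<in> Zs V E T. D \<noteq> {} \<and> (\<forall>D'\<in>Zs V E T. D' \<subseteq> D \<longrightarrow> D' = {} \<or> D' = D)}"

lemma Zs_sdiff: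
  assumes "finite E" "A \<in> Zs V E T" "B \<in> Zs V E T"
  shows "A \<triangle> B \<in> Zs V E T"
proof -
  have f: "finite A" "finite B" using assms unfolding Zs_def by (auto intro: finite_subset)
  have e: "oddset V (A \<triangle> B) = oddset V A \<triangle> oddset V B" by (rule oddset_sdiff[OF f])
  have "A \<subseteq> E" "B \<subseteq> E" "oddset V A = {} \<or> oddset V A = T" "oddset V B = {} \<or> oddset V B = T"
    using assms(2,3) unfolding Zs_def by auto
  then show ?thesis unfolding Zs_def mem_Collect_eq e by auto
qed

lemma circ_below:
  assumes "finite E" "X \<in> Zs V E T" "X \<noteq> {}"
  shows "\<exists>D\<in>circs V E T. D \<subseteq> X"
  using assms(2,3)
proof (induction "card X" arbitrary: X rule: less_induct)
  case less
  show ?case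
  proof (cases "X \<in> circs V E T")
    case True then show ?thesis by blast
  next
    case False
    then obtain D' where D': "D' \<in> Zs V E T" "D' \<subseteq> X" "D' \<noteq> {}" "D' \<noteq> X"
      using less.prems unfolding circs_def by blast
    have "finite X" using less.prems assms(1) unfolding Zs_def by (auto intro: finite_subset)
    then have "card D' < card X" using D' by (meson psubsetI psubset_card_mono)
    then obtain D where "D \<in> circs V E T" "D \<subseteq> D'" using less.hyps[OF _ D'(1) D'(3)] by blast
    then show ?thesis using D'(2) by blast
  qed
qed

lemma decomp:
  assumes "finite E" "X \<in> Zs V E T"
  shows "\<exists>F. F \<subseteq> circs V E T \<and> pairwise disjnt F \<and> \<Union>F = X"
  using assms(2)
proof (induction "card X" arbitrary: X rule: less_induct)
  case less
  show ?case
  proof (cases "X = {}")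
    case True then show ?thesis by (intro exI[of _ "{}"]) auto
  next
    case False
    obtain D where D: "D \<in> circs V E T" "D \<subseteq> X" using circ_below[OF assms(1) less.prems False] by blast
    have DZ: "D \<in> Zs V E T" "D \<noteq> {}" using D unfolding circs_def by auto
    have eq: "X \<triangle> D = X - D" using D by auto
    have XZ: "X - D \<in> Zs V E T" using Zs_sdiff[OF assms(1) less.prems DZ(1)] eq by simp
    have "finite X" using less.prems assms(1) unfolding Zs_def by (auto intro: finite_subset)
    then have "card (X - D) < card X" using D DZ
      by (intro psubset_card_mono) auto
    then obtain F where F: "F \<subseteq> circs V E T" "pairwise disjnt F" "\<Union>F = X - D"
      using less.hyps[OF _ XZ] by blast
    have "pairwise disjnt (insert D F)"
      using F(2,3) unfolding pairwise_def disjnt_def by blast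
    moreover have "\<Union>(insert D F) = X" using F(3) D(2) by auto
    ultimately show ?thesis using F(1) D(1) by (intro exI[of _ "insert D F"]) auto
  qed
qed

lemma circs_binary:
  assumes "finite E" "E \<noteq> {}"
  shows "binary_matroid E (circs V E T)"
proof -
  have bin: "\<forall>A\<in>circs V E T. \<forall>B\<in>circs V E T. \<exists>F. F \<subseteq> circs V E T \<and> pairwise disjnt F \<and> \<Union>F = (A - B) \<union> (B - A)"
  proof (intro ballI)
    fix A B assume "A \<in> circs V E T" "B \<in> circs V E T"
    then have "A \<in> Zs V E T" "B \<in> Zs V E T" unfolding circs_def by auto
    then have "A \<triangle> B \<in> Zs V E T" by (rule Zs_sdiff[OF assms(1)])
    then show "\<exists>F. F \<subseteq> circs V E T \<and> pairwise disjnt F \<and> \<Union>F = (A - B) \<union> (B - A)"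
      by (rule decomp[OF assms(1)])
  qed
  have sub: "circs V E T \<subseteq> Pow E" unfolding circs_def Zs_def by auto
  have anti: "\<forall>A\<in>circs V E T. \<forall>B\<in>circs V E T. A \<subseteq> B \<longrightarrow> A = B"
    unfolding circs_def by blast
  have elim: "\<forall>A\<in>circs V E T. \<forall>B\<in>circs V E T. \<forall>a\<in>A \<inter> B. \<forall>b\<in>(A \<union> B) - (A \<inter> B).
          \<exists>D\<in>circs V E T. D \<subseteq> A \<union> B \<and> a \<notin> D \<and> b \<in> D"
  proof (intro ballI)
    fix A B a b assume A: "A \<in> circs V E T" and B: "B \<in> circs V E T" and a: "a \<in> A \<inter> B"
      and b: "b \<in> (A \<union> B) - (A \<inter> B)"
    obtain F where F: "F \<subseteq> circs V E T" "pairwise disjnt F" "\<Union>F = (A - B) \<union> (B - A)"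
      using bin[rule_format, OF A B] by auto
    then obtain D where "D \<in> F" "b \<in> D" using b by blast
    then show "\<exists>D\<in>circs V E T. D \<subseteq> A \<union> B \<and> a \<notin> D \<and> b \<in> D"
      using F a by (intro bexI[of _ D]) auto
  qed
  show ?thesis unfolding binary_matroid_def matroid_def using assms(2) sub anti elim bin by blast
qed


lemma graph_finE: "graph V E \<Longrightarrow> finite E"
  unfolding graph_def by (metis (no_types, lifting) PowI finite_Pow_iff finite_subset insert_subset subsetI empty_subsetI)

lemma main:
  assumes "graph V E" "E \<noteq> {}" "J0 \<subseteq> E" "oddset V J0 \<noteq> {}"
    "\<And>vs. is_cycle V E vs \<Longrightarrow> \<not> oddset V J0 \<subseteq> set vs"
  shows "\<exists>(f::'v set \<Rightarrow> 'v set) S \<C>. binary_matroid S \<C> \<and> nontrivial_circuit_injection f (cycle_matroid V E) (S, \<C>)"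
proof -
  define T where "T = oddset V J0"
  have fE: "finite E" using graph_finE assms(1) .
  have gc: "C \<in> circs V E T" if Cg: "C \<in> graph_circuits V E" for C
  proof -
    obtain vs where vs: "C = cycle_edges vs" "is_cycle V E vs"
      using Cg unfolding graph_circuits_def by blast
    have cy: "length vs \<ge> 3" "distinct vs" "set vs \<subseteq> V" "cycle_edges vs \<subseteq> E"
      using vs(2) unfolding is_cycle_def by auto
    have CZ: "C \<in> Zs V E T" using vs cy oddset_cycle[OF cy(2,1)] unfolding Zs_def by auto
    have "edg vs 0 \<in> C" using vs cy unfolding cycle_edges_edg by auto
    then have Cne: "C \<noteq> {}" by blast
    have "D' = {} \<or> D' = C" if "D' \<in> Zs V E T" "D' \<subseteq> C" for D'
    proof (rule ccontr)
      assume "\<not> ?thesis"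
      then have ne: "D' \<noteq> {}" "D' \<noteq> C" by auto
      have o: "oddset V D' = {} \<or> oddset V D' = T" using that unfolding Zs_def by auto
      have s1: "D' \<subseteq> cycle_edges vs" "D' \<noteq> cycle_edges vs" using that(2) ne(2) vs(1) by auto
      moreover have "oddset V D' \<noteq> {}" using deg_one_sub_cycle[OF cy(2,1,3) s1(1) ne(1) s1(2)] .
      moreover have "oddset V D' \<subseteq> set vs" using oddset_sub_cycle[OF s1(1)] .
      ultimately show False using o assms(5)[OF vs(2)] T_def by auto
    qed
    then show ?thesis unfolding circs_def using CZ Cne by blast
  qed
  have gc_odd: "oddset V C = {}" if Cg: "C \<in> graph_circuits V E" for C
  proof -
    obtain vs where vs: "C = cycle_edges vs" "is_cycle V E vs"
      using Cg unfolding graph_circuits_def by blast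
    then show ?thesis using oddset_cycle unfolding is_cycle_def by metis
  qed
  obtain D where D: "D \<subseteq> E \<and> oddset V D = T" and Dmin: "\<And>P. P \<subseteq> E \<and> oddset V P = T \<Longrightarrow> card D \<le> card P"
    using ex_has_least_nat[of "\<lambda>P. P \<subseteq> E \<and> oddset V P = T" J0 card] assms(3) T_def by blast
  have DZ: "D \<in> Zs V E T" using D unfolding Zs_def by auto
  have Tne: "T \<noteq> {}" using assms(4) T_def by simp
  have Dne: "D \<noteq> {}" using D Tne unfolding oddset_def deg_def by auto
  have fD: "finite D" using D fE by (auto intro: finite_subset)
  have Dc: "D \<in> circs V E T"
  proof -
    have "D' = {} \<or> D' = D" if "D' \<in> Zs V E T" "D' \<subseteq> D" for D'
    proof (rule ccontr)
      assume "\<not> ?thesis"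
      then have ne: "D' \<noteq> {}" "D' \<noteq> D" by auto
      have fD': "finite D'" using that fD by (auto intro: finite_subset)
      have lt: "card D' < card D" using ne that fD by (meson psubsetI psubset_card_mono)
      have "oddset V D' = {} \<or> oddset V D' = T" "D' \<subseteq> E" using that unfolding Zs_def by auto
      then show False
      proof (elim disjE)
        assume "oddset V D' = T"
        then show False using Dmin[of D'] lt \<open>D' \<subseteq> E\<close> by simp
      next
        assume o: "oddset V D' = {}"
        have "oddset V (D \<triangle> D') = T" using oddset_sdiff[OF fD fD'] o D by simp
        moreover have "D \<triangle> D' = D - D'" using that by auto
        moreover have "card (D - D') < card D"
          using ne that fD by (intro psubset_card_mono) auto
        ultimately show False using Dmin[of "D - D'"] D by auto
      qed
    qed
    then show ?thesis unfolding circs_def using DZ Dne by blast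
  qed
  have Dng: "D \<notin> graph_circuits V E" using gc_odd D Tne by auto
  have "binary_matroid E (circs V E T)" using circs_binary[OF fE assms(2)] .
  moreover have "nontrivial_circuit_injection (\<lambda>x. x) (cycle_matroid V E) (E, circs V E T)"
    unfolding nontrivial_circuit_injection_def circuit_injection_def cycle_matroid_def
    using gc Dc Dng by (auto simp: bij_betw_def)
  ultimately show ?thesis by blast
qed


definition rel :: "'v set \<Rightarrow> 'v set set \<Rightarrow> 'v \<Rightarrow> 'v \<Rightarrow> bool" where
  "rel V E a b \<longleftrightarrow> a = b \<or> (\<exists>J\<subseteq>E. oddset V J = {a,b})"

lemma edge_rel:
  assumes "graph V E" "{x,y} \<in> E"
  shows "rel V E x y"
proof (cases "x = y")
  case True then show ?thesis unfolding rel_def by simp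
next
  case False
  have xy: "x \<in> V" "y \<in> V" using assms unfolding graph_def by (metis doubleton_eq_iff)+
  have "deg {{x,y}} v = (if v \<in> {x,y} then 1 else 0)" for v
    proof -
      have "{e\<in>{{x,y}}. v\<in>e} = (if v\<in>{x,y} then {{x,y}} else {})" by auto
      then show ?thesis unfolding deg_def by simp
    qed
  then have "oddset V {{x,y}} = {x,y}" using xy unfolding oddset_def by auto
  then show ?thesis unfolding rel_def using assms(2) by blast
qed

lemma rel_sym: "rel V E a b \<Longrightarrow> rel V E b a"
  unfolding rel_def by (auto simp: insert_commute)

lemma rel_trans:
  assumes "finite E" "rel V E a b" "rel V E b c"
  shows "rel V E a c"
proof -
  consider "a = b" | "b = c" | "a = c" | "a \<noteq> b" "b \<noteq> c" "a \<noteq> c" by blast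
  then show ?thesis
  proof cases
    case 4
    obtain J1 J2 where J: "J1 \<subseteq> E" "oddset V J1 = {a,b}" "J2 \<subseteq> E" "oddset V J2 = {b,c}"
      using assms 4 unfolding rel_def by blast
    have f: "finite J1" "finite J2" using J assms(1) by (auto intro: finite_subset)
    have "oddset V (J1 \<triangle> J2) = {a,c}" using oddset_sdiff[OF f] J 4 by auto
    moreover have "J1 \<triangle> J2 \<subseteq> E" using J by auto
    ultimately show ?thesis unfolding rel_def by blast
  qed (use assms in \<open>auto simp: rel_def\<close>)
qed

lemma even_sets:
  assumes "finite E" "\<forall>a\<in>V. \<forall>b\<in>V. rel V E a b" "finite V"
  shows "T \<subseteq> V \<Longrightarrow> even (card T) \<Longrightarrow> \<exists>J\<subseteq>E. oddset V J = T"
proof (induction "card T" arbitrary: T rule: less_induct)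
  case less
  show ?case
  proof (cases "T = {}")
    case True
    then show ?thesis unfolding oddset_def deg_def by (intro exI[of _ "{}"]) auto
  next
    case False
    have fT: "finite T" using less.prems assms(3) by (auto intro: finite_subset)
    obtain a where a: "a \<in> T" using False by blast
    have "card T \<noteq> 1" using less.prems by auto
    then obtain b where b: "b \<in> T" "b \<noteq> a" using a fT
      by (metis card_1_singletonE insertE card_0_eq False is_singletonI' is_singleton_altdef)
    define T' where "T' = T - {a,b}"
    have sub: "{a,b} \<subseteq> T" using a b by auto
    have c2: "card {a,b} = 2" using b by auto
    have "card T' = card T - 2" unfolding T'_def using card_Diff_subset[OF _ sub] c2 by simp
    moreover have "card T \<ge> 2" using card_mono[OF fT sub] c2 by simp
    ultimately have cT': "card T = card T' + 2" by simp
    then obtain J' where J': "J' \<subseteq> E" "oddset V J' = T'"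
      using less.hyps[of T'] less.prems unfolding T'_def by auto
    have abV: "a \<in> V" "b \<in> V" using a b less.prems(1) by auto
    have "rel V E a b" using assms(2) abV by blast
    then obtain J2 where J2: "J2 \<subseteq> E" "oddset V J2 = {a,b}"
      using b(2) unfolding rel_def by auto
    have f: "finite J'" "finite J2" using J' J2 assms(1) by (auto intro: finite_subset)
    have "oddset V (J' \<triangle> J2) = T" using oddset_sdiff[OF f] J' J2 a b unfolding T'_def by auto
    moreover have "J' \<triangle> J2 \<subseteq> E" using J' J2 by auto
    ultimately show ?thesis by blast
  qed
qed

lemma cycle_rel0:
  assumes "graph V E" "is_cycle V E vs"
  shows "i < length vs \<Longrightarrow> rel V E (vs!0) (vs!i)"
proof (induction i)
  case 0 then show ?case unfolding rel_def by simp
next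
  case (Suc i)
  have "edg vs i \<in> E" using assms(2) Suc.prems unfolding is_cycle_def cycle_edges_edg by auto
  then have "{vs!i, vs!Suc i} \<in> E" using Suc.prems unfolding edg_def by simp
  then have "rel V E (vs!i) (vs!Suc i)" using edge_rel assms(1) by metis
  then show ?case using Suc rel_trans graph_finE assms(1) by (metis Suc_lessD)
qed

lemma cycle_rel:
  assumes "graph V E" "is_cycle V E vs" "a \<in> set vs" "b \<in> set vs"
  shows "rel V E a b"
proof -
  obtain i j where "i < length vs" "a = vs!i" "j < length vs" "b = vs!j"
    using assms(3,4) by (metis in_set_conv_nth)
  then show ?thesis using cycle_rel0[OF assms(1,2)] rel_sym rel_trans graph_finE assms(1) by metis
qed

lemma keyT:
  assumes "graph V E" "no_isolated_vertices V E" "T \<subseteq> V" "even (card T)" "T \<noteq> {}"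
    "\<And>vs. is_cycle V E vs \<Longrightarrow> \<not> T \<subseteq> set vs"
  shows "\<exists>(f::'v set \<Rightarrow> 'v set) S \<C>. binary_matroid S \<C> \<and> nontrivial_circuit_injection f (cycle_matroid V E) (S, \<C>)"
proof -
  have fE: "finite E" using graph_finE assms(1) .
  have fV: "finite V" using assms(1) unfolding graph_def by simp
  have Ene: "E \<noteq> {}" using assms(2,3,5) unfolding no_isolated_vertices_def by blast
  show ?thesis
  proof (cases "\<forall>a\<in>V. \<forall>b\<in>V. rel V E a b")
    case True
    then obtain J0 where "J0 \<subseteq> E" "oddset V J0 = T" using even_sets[OF fE True fV assms(3,4)] by blast
    then show ?thesis using main[OF assms(1) Ene] assms(5,6) by metis
  next
    case False
    then obtain a b where ab: "a \<in> V" "b \<in> V" "\<not> rel V E a b" by blast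
    have ed: "\<exists>x'. {x,x'} \<in> E" if "x \<in> V" for x
    proof -
      have "\<exists>e\<in>E. x \<in> e" using assms(2) that unfolding no_isolated_vertices_def by simp
      then obtain e where "e \<in> E" "x \<in> e" by auto
      moreover then obtain u v where "e = {u,v}" using assms(1) unfolding graph_def by blast
      ultimately show ?thesis by (metis insert_commute insertE singletonD)
    qed
    obtain a' b' where e: "{a,a'} \<in> E" "{b,b'} \<in> E" using ed ab by metis
    have r: "rel V E a a'" "rel V E b b'" using e edge_rel assms(1) by metis+
    have ne: "a \<noteq> b" "a \<noteq> b'" "a' \<noteq> b" using ab(3) r rel_sym rel_trans fE unfolding rel_def by metis+
    define J0 where "J0 = {{a,a'}} \<triangle> {{b,b'}}"
    have "oddset V J0 = oddset V {{a,a'}} \<triangle> oddset V {{b,b'}}"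
      unfolding J0_def by (rule oddset_sdiff) auto
    moreover have "oddset V {{a,a'}} = {a,a'} \<or> a = a'"
    proof -
      have "a \<in> V" "a' \<in> V" using assms(1) e unfolding graph_def by (metis doubleton_eq_iff)+
      moreover have "deg {{a,a'}} v = (if v \<in> {a,a'} then 1 else 0)" for v
    proof -
      have "{e\<in>{{a,a'}}. v\<in>e} = (if v\<in>{a,a'} then {{a,a'}} else {})" by auto
      then show ?thesis unfolding deg_def by simp
    qed
      ultimately show ?thesis unfolding oddset_def by auto
    qed
    moreover have "oddset V {{b,b'}} = {b,b'} \<or> b = b'"
    proof -
      have "b \<in> V" "b' \<in> V" using assms(1) e unfolding graph_def by (metis doubleton_eq_iff)+
      moreover have "deg {{b,b'}} v = (if v \<in> {b,b'} then 1 else 0)" for v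
    proof -
      have "{e\<in>{{b,b'}}. v\<in>e} = (if v\<in>{b,b'} then {{b,b'}} else {})" by auto
      then show ?thesis unfolding deg_def by simp
    qed
      ultimately show ?thesis unfolding oddset_def by auto
    qed
    moreover have "a \<noteq> a'" "b \<noteq> b'" using assms(1) e unfolding graph_def by (metis doubleton_eq_iff insert_absorb2)+
    ultimately have ins: "a \<in> oddset V J0" "b \<in> oddset V J0" using ne by auto
    have J0E: "J0 \<subseteq> E" using e unfolding J0_def by auto
    have "\<not> oddset V J0 \<subseteq> set vs" if "is_cycle V E vs" for vs
      using ins cycle_rel[OF assms(1) that] ab(3) by blast
    then show ?thesis using main[OF assms(1) Ene J0E] ins by blast
  qed
qed

lemma set_sub_cv: "set vs \<subseteq> circuit_vertices (cycle_edges vs)"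
  unfolding circuit_vertices_def cycle_edges_edg edg_def
  by (auto simp: in_set_conv_nth)

theorem lemma2p2:
  fixes V :: "'v set" and E :: "'v set set" and N :: nat
  assumes "graph V E"
    and "V \<noteq> {}"
    and "no_isolated_vertices V E"
    and "\<not> (\<exists>(f :: 'v set \<Rightarrow> 'v set) S \<C>.
              binary_matroid S \<C> \<and> nontrivial_circuit_injection f (cycle_matroid V E) (S, \<C>))"
  shows "(card V = 2 * N \<longrightarrow> hamiltonian V E)
       \<and> (card V = 2 * N + 1 \<longrightarrow> almost_hamiltonian V E)"
proof (intro conjI impI)
  assume c: "card V = 2 * N"
  show "hamiltonian V E"
  proof (rule ccontr)
    assume nh: "\<not> hamiltonian V E"
    have "\<not> V \<subseteq> set vs" if "is_cycle V E vs" for vs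
    proof
      assume "V \<subseteq> set vs"
      then have "V \<subseteq> circuit_vertices (cycle_edges vs)" using set_sub_cv[of vs] by (rule subset_trans)
      moreover have "cycle_edges vs \<in> graph_circuits V E" using that unfolding graph_circuits_def by blast
      ultimately show False using nh unfolding hamiltonian_def by blast
    qed
    then show False using keyT[OF assms(1,3) _ _ assms(2)] c assms(4) by auto
  qed
next
  assume c: "card V = 2 * N + 1"
  show "almost_hamiltonian V E"
  proof (rule ccontr)
    assume nh: "\<not> almost_hamiltonian V E"
    then obtain W where W: "W \<subseteq> V" "card W = card V - 1"
      "\<forall>C\<in>graph_circuits V E. \<not> W \<subseteq> circuit_vertices C"
      unfolding almost_hamiltonian_def by blast
    have "\<not> W \<subseteq> set vs" if "is_cycle V E vs" for vs
    proof
      assume "W \<subseteq> set vs"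
      then have "W \<subseteq> circuit_vertices (cycle_edges vs)" using set_sub_cv[of vs] by (rule subset_trans)
      moreover have "cycle_edges vs \<in> graph_circuits V E" using that unfolding graph_circuits_def by blast
      ultimately show False using W(3) by blast
    qed
    moreover have "N \<noteq> 0"
    proof
      assume "N = 0"
      then obtain v where "V = {v}" using c card_1_singletonE by auto
      then obtain e where "e \<in> E" "v \<in> e" using assms(3) unfolding no_isolated_vertices_def by blast
      then show False using assms(1) \<open>V = {v}\<close> unfolding graph_def by blast
    qed
    moreover have "W \<noteq> {}" using W(2) c \<open>N \<noteq> 0\<close> by auto
    moreover have "even (card W)" using W(2) c by simp
    ultimately show False using keyT[OF assms(1,3) W(1)] assms(4) by blast
  qed
qed

end
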